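(* Let $\mathcal{X},\mathcal{Y}$ be finite sets, $\mathcal{T}=\mathbb{N}$, and let $p(X,Y)\in\Delta_{\mathcal{X}\times\mathcal{Y}}$ with $p(X)$ of full support. Put $\Lambda:=I(X;Y)$ and, for $0\le\lambda\le\Lambda$, $$\mathrm{IB}(\lambda):=\operatorname{argmin}\{\, I_q(X;T) \;:\; q(T|X)\in C(\mathcal{X},\mathcal{T}),\ I_q(T;Y)\ge \lambda\,\}.$$ Then for every $\sigma\in\mathrm{Bij}(\mathcal{X})$: (i) $\mathrm{IB}(\Lambda)=\{\gamma\circ\pi_{\mathcal{X}} : \gamma\in C_{\mathrm{cong}}(\bar{\mathcal{X}},\mathcal{T})\}$; (ii) if $\kappa\in\mathrm{IB}(\Lambda)$, then $\sigma\in G_{\mathrm{ci}}$ if and only if $\kappa\circ\sigma=\kappa$; (iii) if $\sigma\in G_{\mathrm{ci}}$, then $\kappa\circ\sigma=\kappa$ for every $0\le\lambda\le\Lambda$ and every $\kappa\in\mathrm{IB}(\lambda)$; (iv) the partition $\bar{\mathcal{X}}$ coincides with the partition of $\mathcal{X}$ into $G_{\mathrm{ci}}$-orbits, i.e. $\pi_{\mathcal{X}}$ coincides with the projection on orbits $\pi_{\mathrm{ci}}:\mathcal{X}\to\mathcal{X}/G_{\mathrm{ci}}$.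
   Context: All alphabets are finite except $\mathcal{T}=\mathbb{N}$. $\Delta_{\mathcal{A}}$ is the probability simplex on $\mathcal{A}$; $C(\mathcal{A},\mathcal{B})$ is the set of channels (conditional probabilities) $\kappa(b|a)$ from $\mathcal{A}$ to $\mathcal{B}$; functions are viewed as deterministic channels, and $\circ$ denotes channel composition $(\mu\circ\kappa)(c|a)=\sum_b\mu(c|b)\kappa(b|a)$. $\mathrm{Bij}(\mathcal{A})$ is the set of bijections of $\mathcal{A}$ and $e_{\mathcal{A}}$ the identity. A channel $\gamma\in C(\mathcal{A},\mathcal{B})$ is congruent, written $\gamma\in C_{\mathrm{cong}}(\mathcal{A},\mathcal{B})$, if there is a function $f:\mathcal{B}\to\mathcal{A}$ with $f\circ\gamma=e_{\mathcal{A}}$. For $q(T|X)\in C(\mathcal{X},\mathcal{T})$, the joint distribution is $q(x,y,t):=p(x,y)q(t|x)$ (Markov chain $T-X-Y$), and $I_q$ denotes mutual information under it. The channel invariance group $G_{\mathrm{ci}}$ is the group of $\sigma\in\mathrm{Bij}(\mathcal{X})$ with $p(Y|X)\circ\sigma=p(Y|X)$, i.e. $p(Y|\sigma(x))=p(Y|x)$ for all $x$. The equivalence relation $x\sim_{\mathcal{X}}x'\iff p(Y|x)=p(Y|x')$ has partition $\bar{\mathcal{X}}$ and projection $\pi_{\mathcal{X}}:\mathcal{X}\to\bar{\mathcal{X}}$. *)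

theory Defs
  imports "HOL-Probability.Probability_Mass_Function" "HOL-Analysis.Infinite_Sum"
begin

text \<open>Channels from A to B are represented as functions A \<Rightarrow> B pmf
  (a conditional distribution for each input). Channel composition
  (mu o kappa)(c|a) = sum_b mu(c|b) kappa(b|a):\<close>
definition chan_comp :: "('b \<Rightarrow> 'c pmf) \<Rightarrow> ('a \<Rightarrow> 'b pmf) \<Rightarrow> ('a \<Rightarrow> 'c pmf)" where
  "chan_comp \<mu> \<kappa> = (\<lambda>a. bind_pmf (\<kappa> a) \<mu>)"

definition det :: "('a \<Rightarrow> 'b) \<Rightarrow> ('a \<Rightarrow> 'b pmf)" where
  "det f = (\<lambda>a. return_pmf (f a))"

definition congruent_chan :: "'a set \<Rightarrow> ('a \<Rightarrow> 'b pmf) \<Rightarrow> bool" where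
  "congruent_chan A \<gamma> \<longleftrightarrow>
     (\<exists>f. (\<forall>b. f b \<in> A) \<and> (\<forall>a\<in>A. chan_comp (det f) \<gamma> a = det id a))"

definition mutual_info :: "('a \<times> 'b) pmf \<Rightarrow> real" where
  "mutual_info r = infsum (\<lambda>(a,b). pmf r (a,b) *
      ln (pmf r (a,b) / (pmf (map_pmf fst r) a * pmf (map_pmf snd r) b))) UNIV"

definition joint :: "('x \<times> 'y) pmf \<Rightarrow> ('x \<Rightarrow> nat pmf) \<Rightarrow> ('x \<times> 'y \<times> nat) pmf" where
  "joint p q = bind_pmf p (\<lambda>(x,y). map_pmf (\<lambda>t. (x,y,t)) (q x))"

definition I_XT :: "('x \<times> 'y) pmf \<Rightarrow> ('x \<Rightarrow> nat pmf) \<Rightarrow> real" where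
  "I_XT p q = mutual_info (map_pmf (\<lambda>(x,y,t). (x,t)) (joint p q))"

definition I_TY :: "('x \<times> 'y) pmf \<Rightarrow> ('x \<Rightarrow> nat pmf) \<Rightarrow> real" where
  "I_TY p q = mutual_info (map_pmf (\<lambda>(x,y,t). (t,y)) (joint p q))"

definition IB :: "('x \<times> 'y) pmf \<Rightarrow> real \<Rightarrow> ('x \<Rightarrow> nat pmf) set" where
  "IB p lam = {q. I_TY p q \<ge> lam \<and> (\<forall>q'. I_TY p q' \<ge> lam \<longrightarrow> I_XT p q \<le> I_XT p q')}"

definition condY :: "('x \<times> 'y) pmf \<Rightarrow> 'x \<Rightarrow> 'y pmf" where
  "condY p x = map_pmf snd (cond_pmf p {z. fst z = x})"

definition Gci :: "('x \<times> 'y) pmf \<Rightarrow> ('x \<Rightarrow> 'x) set" where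
  "Gci p = {\<sigma>. bij \<sigma> \<and> chan_comp (condY p) (det \<sigma>) = condY p}"

definition piX :: "('x \<times> 'y) pmf \<Rightarrow> 'x \<Rightarrow> 'x set" where
  "piX p x = {x'. condY p x' = condY p x}"

definition Xbar :: "('x \<times> 'y) pmf \<Rightarrow> 'x set set" where
  "Xbar p = range (piX p)"

definition pi_ci :: "('x \<times> 'y) pmf \<Rightarrow> 'x \<Rightarrow> 'x set" where
  "pi_ci p x = {\<sigma> x | \<sigma>. \<sigma> \<in> Gci p}"

end

theory Submission
  imports Defs
begin


definition PX :: "('x \<times> 'y) pmf \<Rightarrow> 'x \<Rightarrow> real" where "PX p x = pmf (map_pmf fst p) x"
definition PY :: "('x \<times> 'y) pmf \<Rightarrow> 'y \<Rightarrow> real" where "PY p y = pmf (map_pmf snd p) y"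
definition QT :: "('x::finite \<times> 'y) pmf \<Rightarrow> ('x \<Rightarrow> nat pmf) \<Rightarrow> nat \<Rightarrow> real" where
  "QT p \<kappa> t = (\<Sum>x\<in>UNIV. PX p x * pmf (\<kappa> x) t)"
definition RTY :: "('x::finite \<times> 'y) pmf \<Rightarrow> ('x \<Rightarrow> nat pmf) \<Rightarrow> nat \<Rightarrow> 'y \<Rightarrow> real" where
  "RTY p \<kappa> t y = (\<Sum>x\<in>UNIV. pmf p (x,y) * pmf (\<kappa> x) t)"

lemma joint_XT: "map_pmf (\<lambda>(x,y,t). (x,t)) (joint p \<kappa>) = bind_pmf (map_pmf fst p) (\<lambda>x. map_pmf (Pair x) (\<kappa> x))"
  unfolding joint_def map_bind_pmf bind_map_pmf
  by (intro bind_pmf_cong) (auto simp: map_pmf_comp)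

lemma joint_TY: "map_pmf (\<lambda>(x,y,t). (t,y)) (joint p \<kappa>) = bind_pmf p (\<lambda>(x,y). map_pmf (\<lambda>t. (t,y)) (\<kappa> x))"
  unfolding joint_def map_bind_pmf
  by (intro bind_pmf_cong) (auto simp: map_pmf_comp)

lemma joint_X: "map_pmf (\<lambda>(x,y,t). x) (joint p \<kappa>) = map_pmf fst p"
  unfolding joint_def map_bind_pmf
  by (simp add: map_pmf_comp case_prod_beta bind_return_pmf' flip: map_pmf_def)

lemma joint_Y: "map_pmf (\<lambda>(x,y,t). y) (joint p \<kappa>) = map_pmf snd p"
  unfolding joint_def map_bind_pmf
  by (simp add: map_pmf_comp case_prod_beta bind_return_pmf' flip: map_pmf_def)

lemma joint_T: "map_pmf (\<lambda>(x,y,t). t) (joint p \<kappa>) = bind_pmf (map_pmf fst p) \<kappa>"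
  unfolding joint_def map_bind_pmf bind_map_pmf
  by (simp add: map_pmf_comp case_prod_beta map_pmf_ident)

lemma pmf_T: "pmf (map_pmf (\<lambda>(x,y,t). t) (joint p \<kappa>)) t = QT p (\<kappa>::'x::finite \<Rightarrow> _) t"
  unfolding joint_T pmf_bind QT_def PX_def
  by (subst integral_measure_pmf_real[where A=UNIV]) (auto simp: mult.commute)

lemma pmf_map_Pair: "pmf (map_pmf (Pair a) M) (x,t) = (if a = x then pmf M t else 0)"
proof (cases "a = x")
  case True thus ?thesis using pmf_map_inj'[of "Pair a" M t] by (simp add: inj_on_def)
next
  case False thus ?thesis by (subst pmf_map_outside) auto
qed

lemma pmf_map_Pair2: "pmf (map_pmf (\<lambda>t. (t,a)) M) (t,y) = (if a = y then pmf M t else 0)"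
proof (cases "a = y")
  case True thus ?thesis using pmf_map_inj'[of "\<lambda>t. (t,a)" M t] by (simp add: inj_on_def)
next
  case False thus ?thesis by (subst pmf_map_outside) auto
qed

lemma pmf_XT: "pmf (map_pmf (\<lambda>(x,y,t). (x,t)) (joint p \<kappa>)) (x,t) = PX p (x::'x::finite) * pmf (\<kappa> x) t"
  unfolding joint_XT pmf_bind PX_def
  apply (subst integral_measure_pmf_real[where A="{x}"])
  apply (auto simp: pmf_map_Pair split: if_splits)
  done

lemma pmf_TY: "pmf (map_pmf (\<lambda>(x,y,t). (t,y)) (joint p \<kappa>)) (t,y) = RTY p (\<kappa>::'x::finite \<Rightarrow> _) t (y::'y::finite)"
  unfolding joint_TY pmf_bind RTY_def
  apply (subst integral_measure_pmf_real[where A="UNIV \<times> {y}"])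
  apply (auto simp: pmf_map_Pair2 split: prod.splits if_splits)
  apply (rule sum.reindex_bij_witness[where j=fst and i="\<lambda>x. (x,y)"])
  apply (auto simp: mult.commute pmf_map_Pair2)
  done

lemma PX_sum: "PX p (x::'x::finite) = (\<Sum>y\<in>UNIV. pmf p (x,(y::'y::finite)))"
  unfolding PX_def pmf_map
  by (subst measure_measure_pmf_finite) (auto intro!: sum.reindex_bij_witness[where j=snd and i="Pair x"])

lemma PY_sum: "PY p (y::'y::finite) = (\<Sum>x\<in>UNIV. pmf p ((x::'x::finite),y))"
  unfolding PY_def pmf_map
  by (subst measure_measure_pmf_finite) (auto intro!: sum.reindex_bij_witness[where j=fst and i="\<lambda>x. (x,y)"])




lemma pmf_summable: "pmf M summable_on A"
proof -
  have "pmf M abs_summable_on A" by (rule pmf_abs_summable)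
  hence "Infinite_Sum.abs_summable_on (pmf M) A" using abs_summable_equivalent by blast
  thus ?thesis using summable_on_iff_abs_summable_on_real by blast
qed

lemma pmf_infsum_1: "infsum (pmf M) UNIV = 1"
  using infsetsum_pmf_eq_1[of M UNIV] infsetsum_infsum[OF pmf_abs_summable[of M UNIV]] by simp

lemma infsum_sum_fin:
  fixes f :: "'i \<Rightarrow> 'a \<Rightarrow> real"
  assumes "finite S" "\<And>i. i \<in> S \<Longrightarrow> f i summable_on A"
  shows "infsum (\<lambda>t. \<Sum>i\<in>S. f i t) A = (\<Sum>i\<in>S. infsum (f i) A) \<and> (\<lambda>t. \<Sum>i\<in>S. f i t) summable_on A"
  using assms
proof (induction S rule: finite_induct)
  case empty thus ?case by simp
next
  case (insert i S)
  have s1: "f i summable_on A" using insert by auto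
  have IH: "infsum (\<lambda>t. \<Sum>i\<in>S. f i t) A = (\<Sum>i\<in>S. infsum (f i) A)" "(\<lambda>t. \<Sum>i\<in>S. f i t) summable_on A"
    using insert by auto
  show ?case using insert(1,2) infsum_add[OF s1 IH(2)] summable_on_add[OF s1 IH(2)] IH(1) by simp
qed

lemma infsum_prod_fin1:
  fixes g :: "'a::finite \<Rightarrow> 'b \<Rightarrow> real"
  assumes "\<And>a. g a summable_on UNIV"
  shows "infsum (\<lambda>(a,b). g a b) UNIV = (\<Sum>a\<in>UNIV. infsum (g a) UNIV)"
proof -
  have U: "(UNIV :: ('a\<times>'b) set) = (\<Union>a\<in>UNIV. Pair a ` UNIV)" by auto
  have e: "infsum (\<lambda>(a,b). g a b) (Pair a ` UNIV) = infsum (g a) UNIV" for a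
    by (subst infsum_reindex) (auto simp: inj_on_def o_def)
  have s: "(\<lambda>(a,b). g a b) summable_on (Pair a ` UNIV)" for a
    by (subst summable_on_reindex) (auto simp: inj_on_def o_def assms)
  have "infsum (\<lambda>(a,b). g a b) UNIV = (\<Sum>a\<in>UNIV. infsum (\<lambda>(a,b). g a b) (Pair a ` UNIV))"
    by (subst U, rule sum_infsum[symmetric]) (auto simp: s)
  thus ?thesis using e by simp
qed

lemma infsum_prod_fin2:
  fixes g :: "'a \<Rightarrow> 'b::finite \<Rightarrow> real"
  assumes "\<And>b. (\<lambda>a. g a b) summable_on UNIV"
  shows "infsum (\<lambda>(a,b). g a b) UNIV = (\<Sum>b\<in>UNIV. infsum (\<lambda>a. g a b) UNIV)"
proof -
  have U: "(UNIV :: ('a\<times>'b) set) = (\<Union>b\<in>UNIV. (\<lambda>a. (a,b)) ` UNIV)" by auto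
  have e: "infsum (\<lambda>(a,b). g a b) ((\<lambda>a. (a,b)) ` UNIV) = infsum (\<lambda>a. g a b) UNIV" for b
    by (subst infsum_reindex) (auto simp: inj_on_def o_def)
  have s: "(\<lambda>(a,b). g a b) summable_on ((\<lambda>a. (a,b)) ` UNIV)" for b
    by (subst summable_on_reindex) (auto simp: inj_on_def o_def assms)
  have "infsum (\<lambda>(a,b). g a b) UNIV = (\<Sum>b\<in>UNIV. infsum (\<lambda>(a,b). g a b) ((\<lambda>a. (a,b)) ` UNIV))"
    by (subst U, rule sum_infsum[symmetric]) (auto simp: s)
  thus ?thesis using e by simp
qed

lemma xlogx_bounds:
  fixes f g c :: real
  assumes "0 \<le> f" "0 \<le> g" "0 < c" "f \<le> c * g"
  shows "\<bar>f * ln (f / g)\<bar> \<le> f * \<bar>ln c\<bar> + f + g"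
proof (cases "f = 0")
  case True thus ?thesis using assms by simp
next
  case False
  hence fp: "f > 0" using assms by simp
  have "g \<noteq> 0" proof
    assume "g = 0" thus False using assms fp by simp
  qed
  hence gp: "g > 0" using assms by simp
  have "f / g \<le> c" using assms gp by (simp add: divide_le_eq mult.commute)
  hence u: "ln (f/g) \<le> ln c" using fp gp assms by simp
  have "ln (g/f) \<le> g/f - 1" using fp gp by (intro ln_le_minus_one) simp
  hence "ln (f/g) \<ge> 1 - g/f" using fp gp by (simp add: ln_div)
  hence "f * ln (f/g) \<ge> f * (1 - g/f)" using fp by (intro mult_left_mono) auto
  moreover have "f * (1 - g/f) = f - g" using fp by (simp add: field_simps)
  ultimately have l: "f * ln (f/g) \<ge> f - g" by simp
  have "f * ln (f/g) \<le> f * ln c" using u fp by (simp add: mult_left_mono)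
  also have "\<dots> \<le> f * \<bar>ln c\<bar>" using fp by (simp add: mult_left_mono)
  finally have "f * ln (f/g) \<le> f * \<bar>ln c\<bar>" .
  moreover have "0 \<le> f * \<bar>ln c\<bar>" using fp by simp
  ultimately show ?thesis using l fp gp unfolding abs_le_iff by linarith
qed

lemma summ_xlogx:
  fixes f g :: "'a \<Rightarrow> real"
  assumes "f summable_on A" "g summable_on A" "\<And>t. 0 \<le> f t" "\<And>t. 0 \<le> g t" "0 < c"
    "\<And>t. f t \<le> c * g t"
  shows "(\<lambda>t. f t * ln (f t / g t)) summable_on A"
proof -
  have "(\<lambda>t. f t * \<bar>ln c\<bar> + f t + g t) summable_on A"
    using assms by (intro summable_on_add summable_on_cmult_left) auto
  hence "Infinite_Sum.abs_summable_on (\<lambda>t. f t * ln (f t / g t)) A"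
    by (rule Infinite_Sum.abs_summable_on_comparison_test') (simp only: real_norm_def, rule xlogx_bounds[OF assms(3,4,5,6)])
  thus ?thesis using summable_on_iff_abs_summable_on_real by blast
qed



lemma ln_eq_minus_one_imp: fixes z :: real assumes "0 < z" "ln z \<ge> z - 1" shows "z = 1"
proof -
  have s: "sqrt z > 0" using assms by simp
  have "ln z = 2 * ln (sqrt z)" using assms by (simp add: ln_sqrt)
  also have "\<dots> \<le> 2 * (sqrt z - 1)" using ln_le_minus_one[OF s] by simp
  finally have "z - 1 \<le> 2 * (sqrt z - 1)" using assms by simp
  moreover have "z = sqrt z * sqrt z" using assms by simp
  ultimately have "(sqrt z - 1)^2 \<le> 0" by (simp add: power2_eq_square algebra_simps)
  hence "sqrt z = 1" by simp
  thus ?thesis using assms by (metis real_sqrt_eq_1_iff)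
qed

lemma logsum_term:
  fixes a b A B :: real
  assumes "0 \<le> a" "0 \<le> b" "a > 0 \<longrightarrow> b > 0" "A > 0" "B > 0"
  shows "a * ln (a/b) - a * ln (A/B) - (a - b * A / B) \<ge> 0"
    and "a * ln (a/b) - a * ln (A/B) - (a - b * A / B) = 0 \<Longrightarrow> a * B = b * A"
proof -
  show "a * ln (a/b) - a * ln (A/B) - (a - b * A / B) \<ge> 0"
  proof (cases "a = 0")
    case True thus ?thesis using assms by simp
  next
    case False
    hence ap: "a > 0" and bp: "b > 0" using assms by auto
    define z where "z = b * A / (a * B)"
    have zp: "z > 0" using ap bp assms by (simp add: z_def)
    have "ln z \<le> z - 1" using ln_le_minus_one[OF zp] .
    moreover have "ln (a/b) - ln (A/B) = - ln z"
      using ap bp assms by (simp add: z_def ln_div ln_mult)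
    moreover have "a * z = b * A / B" using ap by (simp add: z_def)
    ultimately have "a * (ln (a/b) - ln (A/B)) \<ge> a * (1 - z)" using ap
      by (intro mult_left_mono) auto
    thus ?thesis using \<open>a * z = _\<close> by (simp add: algebra_simps)
  qed
  assume eq: "a * ln (a/b) - a * ln (A/B) - (a - b * A / B) = 0"
  show "a * B = b * A"
  proof (cases "a = 0")
    case True
    hence "b * A / B = 0" using eq by simp
    thus ?thesis using True assms by simp
  next
    case False
    hence ap: "a > 0" and bp: "b > 0" using assms by auto
    define z where "z = b * A / (a * B)"
    have zp: "z > 0" using ap bp assms by (simp add: z_def)
    have "ln (a/b) - ln (A/B) = - ln z"
      using ap bp assms by (simp add: z_def ln_div ln_mult)
    moreover have "a * z = b * A / B" using ap by (simp add: z_def)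
    ultimately have h1: "a * ln (a/b) - a * ln (A/B) = a * (- ln z)" and h2: "a * z = b * A / B"
      by (simp_all add: right_diff_distrib[symmetric])
    have "a * (- ln z) = a * (1 - z)" using eq h1 h2 by (simp add: right_diff_distrib)
    hence "a * (ln z - (z - 1)) = 0" by (simp add: algebra_simps)
    hence "ln z = z - 1" using ap by simp
    hence "z = 1" using ln_eq_minus_one_imp zp by simp
    thus ?thesis using ap assms by (simp add: z_def field_simps)
  qed
qed

lemma logsum:
  fixes a b :: "'i \<Rightarrow> real"
  assumes fin: "finite S" and nn: "\<And>i. i \<in> S \<Longrightarrow> 0 \<le> a i" "\<And>i. i \<in> S \<Longrightarrow> 0 \<le> b i"
    and pos: "\<And>i. i \<in> S \<Longrightarrow> a i > 0 \<Longrightarrow> b i > 0"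
  shows "(\<Sum>i\<in>S. a i) * ln ((\<Sum>i\<in>S. a i) / (\<Sum>i\<in>S. b i)) \<le> (\<Sum>i\<in>S. a i * ln (a i / b i))"
    and "(\<Sum>i\<in>S. a i * ln (a i / b i)) \<le> (\<Sum>i\<in>S. a i) * ln ((\<Sum>i\<in>S. a i) / (\<Sum>i\<in>S. b i))
          \<Longrightarrow> i \<in> S \<Longrightarrow> a i * (\<Sum>i\<in>S. b i) = b i * (\<Sum>i\<in>S. a i)"
proof -
  define A where "A = (\<Sum>i\<in>S. a i)"
  define B where "B = (\<Sum>i\<in>S. b i)"
  have A0: "A \<ge> 0" using nn by (simp add: A_def sum_nonneg)
  have main: "A * ln (A / B) \<le> (\<Sum>i\<in>S. a i * ln (a i / b i)) \<and>
     ((\<Sum>i\<in>S. a i * ln (a i / b i)) \<le> A * ln (A / B) \<longrightarrow> (\<forall>i\<in>S. a i * B = b i * A))"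
  proof (cases "A = 0")
    case True
    hence "\<forall>i\<in>S. a i = 0" using nn fin by (simp add: A_def sum_nonneg_eq_0_iff)
    thus ?thesis using True by simp
  next
    case False
    hence Ap: "A > 0" using A0 by simp
    have "\<exists>j\<in>S. a j > 0"
    proof (rule ccontr)
      assume "\<not> (\<exists>j\<in>S. a j > 0)"
      hence "\<forall>j\<in>S. a j = 0" using nn by (simp add: not_less order_antisym)
      hence "A = 0" unfolding A_def by simp
      thus False using Ap by simp
    qed
    then obtain j where j: "j \<in> S" "a j > 0" by blast
    have "b j \<le> B" unfolding B_def using fin j nn(2) by (intro member_le_sum) auto
    hence Bp: "B > 0" using pos[OF j] by simp
    define d where "d i = a i * ln (a i/b i) - a i * ln (A/B) - (a i - b i * A / B)" for i
    have dnn: "\<And>i. i \<in> S \<Longrightarrow> d i \<ge> 0" unfolding d_def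
      using logsum_term(1) nn pos Ap Bp by blast
    have "(\<Sum>i\<in>S. d i) = (\<Sum>i\<in>S. a i * ln (a i / b i)) - A * ln (A / B) - (A - B * A / B)"
      unfolding d_def A_def B_def by (simp add: sum_subtractf sum_distrib_right sum_divide_distrib)
    also have "A - B * A / B = 0" using Bp by simp
    finally have sd: "(\<Sum>i\<in>S. d i) = (\<Sum>i\<in>S. a i * ln (a i / b i)) - A * ln (A / B)" by simp
    have "0 \<le> (\<Sum>i\<in>S. d i)" using dnn by (simp add: sum_nonneg)
    moreover
    { assume "(\<Sum>i\<in>S. a i * ln (a i / b i)) \<le> A * ln (A / B)"
      hence "(\<Sum>i\<in>S. d i) = 0" using sd \<open>0 \<le> (\<Sum>i\<in>S. d i)\<close> by simp
      hence "\<forall>i\<in>S. d i = 0" using dnn fin by (simp add: sum_nonneg_eq_0_iff)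
      hence "\<forall>i\<in>S. a i * B = b i * A" unfolding d_def
        using logsum_term(2) nn pos Ap Bp by blast }
    ultimately show ?thesis using sd by simp
  qed
  show "(\<Sum>i\<in>S. a i) * ln ((\<Sum>i\<in>S. a i) / (\<Sum>i\<in>S. b i)) \<le> (\<Sum>i\<in>S. a i * ln (a i / b i))"
    using main by (simp add: A_def B_def)
  show "(\<Sum>i\<in>S. a i * ln (a i / b i)) \<le> (\<Sum>i\<in>S. a i) * ln ((\<Sum>i\<in>S. a i) / (\<Sum>i\<in>S. b i))
          \<Longrightarrow> i \<in> S \<Longrightarrow> a i * (\<Sum>i\<in>S. b i) = b i * (\<Sum>i\<in>S. a i)"
    using main by (simp add: A_def B_def)
qed

lemma logsum_eq:
  fixes a b :: "'i \<Rightarrow> real"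
  assumes fin: "finite S" and nn: "\<And>i. i \<in> S \<Longrightarrow> 0 \<le> a i" "\<And>i. i \<in> S \<Longrightarrow> 0 \<le> b i"
    and pr: "\<And>i. i \<in> S \<Longrightarrow> a i = c * b i"
  shows "(\<Sum>i\<in>S. a i * ln (a i / b i)) = (\<Sum>i\<in>S. a i) * ln ((\<Sum>i\<in>S. a i) / (\<Sum>i\<in>S. b i))"
proof (cases "(\<Sum>i\<in>S. a i) = 0")
  case True
  hence "\<forall>i\<in>S. a i = 0" using nn fin by (simp add: sum_nonneg_eq_0_iff)
  thus ?thesis using True by simp
next
  case False
  then obtain j where j: "j \<in> S" "a j \<noteq> 0" by (meson sum.neutral)
  hence "c \<noteq> 0" "b j \<noteq> 0" using pr by auto
  have "a j > 0" "b j > 0" using j nn \<open>b j \<noteq> 0\<close> by (auto simp: less_le)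
  moreover have "c = a j / b j" using pr[OF j(1)] \<open>b j \<noteq> 0\<close> by simp
  ultimately have cp: "c > 0" by simp
  have "(\<Sum>i\<in>S. a i * ln (a i / b i)) = (\<Sum>i\<in>S. a i * ln c)"
  proof (rule sum.cong)
    fix i assume "i \<in> S"
    show "a i * ln (a i / b i) = a i * ln c"
      using pr[OF \<open>i \<in> S\<close>] cp by (cases "b i = 0") auto
  qed simp
  also have "\<dots> = (\<Sum>i\<in>S. a i) * ln c" by (simp add: sum_distrib_right)
  also have "(\<Sum>i\<in>S. a i) = c * (\<Sum>i\<in>S. b i)" using pr by (simp add: sum_distrib_left)
  finally show ?thesis using cp False \<open>(\<Sum>i\<in>S. a i) = _\<close> by auto
qed



lemma QT_nonneg: "0 \<le> QT p \<kappa> t"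
  unfolding QT_def PX_def by (simp add: sum_nonneg)

lemma RTY_nonneg: "0 \<le> RTY p \<kappa> t y"
  unfolding RTY_def by (simp add: sum_nonneg)

lemma QT_summable: "QT p \<kappa> summable_on A"
proof -
  have "(\<lambda>t. \<Sum>x\<in>UNIV. PX p x * pmf (\<kappa> x) t) summable_on A"
    using infsum_sum_fin[of UNIV "\<lambda>x t. PX p x * pmf (\<kappa> x) t" A]
    by (simp add: summable_on_cmult_right pmf_summable)
  thus ?thesis unfolding QT_def[abs_def] .
qed

lemma RTY_summable: "(\<lambda>t. RTY p \<kappa> t y) summable_on A"
proof -
  have "(\<lambda>t. \<Sum>x\<in>UNIV. pmf p (x,y) * pmf (\<kappa> x) t) summable_on A"
    using infsum_sum_fin[of UNIV "\<lambda>x t. pmf p (x,y) * pmf (\<kappa> x) t" A]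
    by (simp add: summable_on_cmult_right pmf_summable)
  thus ?thesis unfolding RTY_def[abs_def] .
qed

lemma PX_ge_w: "pmf p (x,y) \<le> PX p (x::'x::finite) * 1" for y :: "'y::finite"
  unfolding PX_sum using member_le_sum[of y UNIV "\<lambda>y. pmf p (x,y)"] by simp

lemma PY_ge_w: "pmf p (x,y) \<le> PY p (y::'y::finite)" for x :: "'x::finite"
  unfolding PY_sum using member_le_sum[of x UNIV "\<lambda>x. pmf p (x,y)"] by simp

lemma RTY_le_QT: "RTY p \<kappa> t (y::'y::finite) \<le> QT p (\<kappa>::'x::finite \<Rightarrow> _) t"
  unfolding RTY_def QT_def
  by (intro sum_mono mult_right_mono) (use PX_ge_w in auto)

lemma XT_summable:
  "(\<lambda>t. PX p x * pmf (\<kappa> x) t * ln (PX p x * pmf (\<kappa> x) t / (PX p x * QT p \<kappa> t))) summable_on A"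
proof (cases "PX p x = 0")
  case True thus ?thesis by simp
next
  case False
  hence px: "PX p x > 0" unfolding PX_def using pmf_nonneg less_eq_real_def by metis
  show ?thesis
  proof (rule summ_xlogx[where c="1 / PX p x"])
    show "(\<lambda>t. PX p x * pmf (\<kappa> x) t) summable_on A" by (simp add: summable_on_cmult_right pmf_summable)
    show "(\<lambda>t. PX p x * QT p \<kappa> t) summable_on A" by (simp add: summable_on_cmult_right QT_summable)
    show "0 \<le> PX p x * pmf (\<kappa> x) t" for t using px by simp
    show "0 \<le> PX p x * QT p \<kappa> t" for t using px QT_nonneg[of p \<kappa> t] by simp
    show "0 < 1 / PX p x" using px by simp
    show "PX p x * pmf (\<kappa> x) t \<le> 1 / PX p x * (PX p x * QT p \<kappa> t)" for t
      using px member_le_sum[of x UNIV "\<lambda>x. PX p x * pmf (\<kappa> x) t"] unfolding QT_def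
      by (simp add: PX_def)
  qed
qed

lemma TY_summable:
  "(\<lambda>t. RTY p \<kappa> t y * ln (RTY p \<kappa> t y / (QT p (\<kappa>::'x::finite \<Rightarrow> _) t * PY p (y::'y::finite)))) summable_on A"
proof (cases "PY p y = 0")
  case True
  hence "\<forall>x. pmf p (x,y) = 0" unfolding PY_sum by (simp add: sum_nonneg_eq_0_iff)
  hence "\<And>t. RTY p \<kappa> t y = 0" unfolding RTY_def by simp
  thus ?thesis by simp
next
  case False
  hence py: "PY p y > 0" unfolding PY_def using pmf_nonneg less_eq_real_def by metis
  show ?thesis
  proof (rule summ_xlogx[where c="1 / PY p y"])
    show "(\<lambda>t. RTY p \<kappa> t y) summable_on A" by (rule RTY_summable)
    show "(\<lambda>t. QT p \<kappa> t * PY p y) summable_on A" by (simp add: summable_on_cmult_left QT_summable)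
    show "0 \<le> RTY p \<kappa> t y" for t by (rule RTY_nonneg)
    show "0 \<le> QT p \<kappa> t * PY p y" for t using py QT_nonneg[of p \<kappa> t] by simp
    show "0 < 1 / PY p y" using py by simp
    show "RTY p \<kappa> t y \<le> 1 / PY p y * (QT p \<kappa> t * PY p y)" for t
      using py RTY_le_QT[of p \<kappa> t y] by simp
  qed
qed

lemma IXT_expr:
  "I_XT p \<kappa> = (\<Sum>x\<in>UNIV. infsum (\<lambda>t. PX p x * pmf (\<kappa> x) t * ln (PX p x * pmf (\<kappa> x) t / (PX p x * QT p \<kappa> t))) UNIV)"
  for p :: "('x::finite \<times> 'y::finite) pmf"
proof -
  have m1: "map_pmf fst (map_pmf (\<lambda>(x,y,t). (x,t)) (joint p \<kappa>)) = map_pmf (\<lambda>(x,y,t). x) (joint p \<kappa>)"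
    unfolding map_pmf_comp by (intro map_pmf_cong) auto
  have m2: "map_pmf snd (map_pmf (\<lambda>(x,y,t). (x,t)) (joint p \<kappa>)) = map_pmf (\<lambda>(x,y,t). t) (joint p \<kappa>)"
    unfolding map_pmf_comp by (intro map_pmf_cong) auto
  have "I_XT p \<kappa> = infsum (\<lambda>(x,t). PX p x * pmf (\<kappa> x) t * ln (PX p x * pmf (\<kappa> x) t / (PX p x * QT p \<kappa> t))) UNIV"
    unfolding I_XT_def mutual_info_def m1 m2 joint_X pmf_XT pmf_T
    by (simp add: PX_def)
  also have "\<dots> = (\<Sum>x\<in>UNIV. infsum (\<lambda>t. PX p x * pmf (\<kappa> x) t * ln (PX p x * pmf (\<kappa> x) t / (PX p x * QT p \<kappa> t))) UNIV)"
    by (rule infsum_prod_fin1) (rule XT_summable)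
  finally show ?thesis .
qed

lemma ITY_expr:
  "I_TY p \<kappa> = (\<Sum>y\<in>UNIV. infsum (\<lambda>t. RTY p \<kappa> t y * ln (RTY p \<kappa> t y / (QT p \<kappa> t * PY p y))) UNIV)"
  for p :: "('x::finite \<times> 'y::finite) pmf"
proof -
  have m1: "map_pmf fst (map_pmf (\<lambda>(x,y,t). (t,y)) (joint p \<kappa>)) = map_pmf (\<lambda>(x,y,t). t) (joint p \<kappa>)"
    unfolding map_pmf_comp by (intro map_pmf_cong) auto
  have m2: "map_pmf snd (map_pmf (\<lambda>(x,y,t). (t,y)) (joint p \<kappa>)) = map_pmf (\<lambda>(x,y,t). y) (joint p \<kappa>)"
    unfolding map_pmf_comp by (intro map_pmf_cong) auto
  have "I_TY p \<kappa> = infsum (\<lambda>(t,y). RTY p \<kappa> t y * ln (RTY p \<kappa> t y / (QT p \<kappa> t * PY p y))) UNIV"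
    unfolding I_TY_def mutual_info_def m1 m2 joint_Y pmf_TY pmf_T
    by (simp add: PY_def)
  also have "\<dots> = (\<Sum>y\<in>UNIV. infsum (\<lambda>t. RTY p \<kappa> t y * ln (RTY p \<kappa> t y / (QT p \<kappa> t * PY p y))) UNIV)"
    by (rule infsum_prod_fin2) (rule TY_summable)
  finally show ?thesis .
qed

lemma MI_expr:
  "mutual_info p = (\<Sum>x\<in>UNIV. \<Sum>y\<in>UNIV. pmf p (x,y) * ln (pmf p (x,y) / (PX p x * PY p y)))"
  for p :: "('x::finite \<times> 'y::finite) pmf"
  unfolding mutual_info_def PX_def PY_def
  by (subst infsum_prod_fin1) auto



definition Pc :: "('x::finite \<times> 'y) pmf \<Rightarrow> 'x \<Rightarrow> real" where
  "Pc p x = (\<Sum>x'\<in>piX p x. PX p x')"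

definition kbar :: "('x::finite \<times> 'y) pmf \<Rightarrow> ('x \<Rightarrow> nat pmf) \<Rightarrow> 'x \<Rightarrow> nat pmf" where
  "kbar p \<kappa> x = bind_pmf (cond_pmf (map_pmf fst p) (piX p x)) \<kappa>"

lemma PX_pos: assumes "set_pmf (map_pmf fst p) = UNIV" shows "PX p x > 0"
  unfolding PX_def using assms by (simp add: pmf_positive)

lemma PX_nonneg: "PX p x \<ge> 0" unfolding PX_def by simp
lemma PY_nonneg: "PY p x \<ge> 0" unfolding PY_def by simp

lemma piX_self: "x \<in> piX p x" unfolding piX_def by simp

lemma piX_eq: "x' \<in> piX p x \<longleftrightarrow> piX p x' = piX p x"
  unfolding piX_def by auto

lemma piX_sym: "x' \<in> piX p x \<longleftrightarrow> x \<in> piX p x'"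
  unfolding piX_def by auto

lemma Pc_pos: assumes "set_pmf (map_pmf fst p) = UNIV" shows "Pc p (x::'x::finite) > 0"
proof -
  have "PX p x \<le> Pc p x" unfolding Pc_def
    by (rule member_le_sum) (auto simp: piX_self PX_nonneg)
  thus ?thesis using PX_pos[OF assms, of x] by simp
qed

lemma Pc_cong: "x' \<in> piX p x \<Longrightarrow> Pc p x' = Pc p x"
  using piX_eq[of x' p x] by (simp add: Pc_def)

lemma condY_pmf:
  fixes p :: "('x::finite \<times> 'y::finite) pmf"
  assumes full: "set_pmf (map_pmf fst p) = UNIV"
  shows "pmf p (x,y) = PX p x * pmf (condY p x) y"
proof -
  have ne: "set_pmf p \<inter> {z. fst z = x} \<noteq> {}"
  proof -
    have "x \<in> set_pmf (map_pmf fst p)" using full by simp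
    hence "x \<in> fst ` set_pmf p" by simp
    then obtain z where "z \<in> set_pmf p" "fst z = x" by blast
    thus ?thesis by blast
  qed
  have m: "measure_pmf.prob p {z. fst z = x} = PX p x"
    unfolding PX_def pmf_map by (simp add: vimage_def)
  have "pmf (condY p x) y = measure_pmf.prob (cond_pmf p {z. fst z = x}) (snd -` {y})"
    unfolding condY_def pmf_map ..
  also have "\<dots> = (\<Sum>z\<in>snd -` {y}. pmf (cond_pmf p {z. fst z = x}) z)"
    by (rule measure_measure_pmf_finite) simp
  also have "\<dots> = (\<Sum>z\<in>snd -` {y}. if fst z = x then pmf p z / PX p x else 0)"
    unfolding pmf_cond[OF ne] m by simp
  also have "\<dots> = (\<Sum>z\<in>snd -` {y} \<inter> {z. fst z = x}. pmf p z / PX p x)"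
    by (simp only: sum.If_cases finite) simp
  also have "snd -` {y} \<inter> {z. fst z = x} = {(x,y)}" by auto
  finally have "pmf (condY p x) y = pmf p (x,y) / PX p x" by simp
  thus ?thesis using PX_pos[OF full, of x] by simp
qed

lemma kbar_pmf:
  fixes p :: "('x::finite \<times> 'y) pmf"
  assumes full: "set_pmf (map_pmf fst p) = UNIV"
  shows "pmf (kbar p \<kappa> x) t = (\<Sum>x'\<in>piX p x. PX p x' * pmf (\<kappa> x') t) / Pc p x"
proof -
  have "x \<in> set_pmf (map_pmf fst p)" using full by simp
  hence ne: "set_pmf (map_pmf fst p) \<inter> piX p x \<noteq> {}" using piX_self[of x p] by blast
  have m: "measure_pmf.prob (map_pmf fst p) (piX p x) = Pc p x"
    unfolding Pc_def PX_def by (rule measure_measure_pmf_finite) simp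
  have "pmf (kbar p \<kappa> x) t = (\<Sum>x'\<in>UNIV. pmf (\<kappa> x') t * pmf (cond_pmf (map_pmf fst p) (piX p x)) x')"
    unfolding kbar_def pmf_bind by (rule integral_measure_pmf_real) auto
  also have "\<dots> = (\<Sum>x'\<in>UNIV. if x' \<in> piX p x then PX p x' * pmf (\<kappa> x') t / Pc p x else 0)"
    using pmf_cond[OF ne] m by (intro sum.cong) (auto simp: PX_def)
  also have "\<dots> = (\<Sum>x'\<in>piX p x. PX p x' * pmf (\<kappa> x') t / Pc p x)"
    by (rule sum.mono_neutral_cong_right) auto
  finally show ?thesis by (simp add: sum_divide_distrib)
qed

lemma kbar_cong: "x' \<in> piX p x \<Longrightarrow> kbar p \<kappa> x' = kbar p \<kappa> x"
  using piX_eq[of x' p x] by (simp add: kbar_def)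

lemma class_reweight:
  fixes p :: "('x::finite \<times> 'y) pmf" and F :: "'x \<Rightarrow> real"
  assumes full: "set_pmf (map_pmf fst p) = UNIV"
  shows "(\<Sum>x\<in>UNIV. F x) = (\<Sum>x\<in>UNIV. PX p x / Pc p x * (\<Sum>x'\<in>piX p x. F x'))"
proof -
  have "(\<Sum>x\<in>UNIV. PX p x / Pc p x * (\<Sum>x'\<in>piX p x. F x'))
      = (\<Sum>x\<in>UNIV. \<Sum>x'\<in>UNIV. if x' \<in> piX p x then PX p x / Pc p x * F x' else 0)"
  proof (rule sum.cong)
    fix x :: 'x
    have "(\<Sum>x'\<in>piX p x. F x') = (\<Sum>x'\<in>UNIV. if x' \<in> piX p x then F x' else 0)"
      using sum.inter_restrict[of UNIV F "piX p x"] by simp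
    thus "PX p x / Pc p x * (\<Sum>x'\<in>piX p x. F x') = (\<Sum>x'\<in>UNIV. if x' \<in> piX p x then PX p x / Pc p x * F x' else 0)"
      by (auto simp: sum_distrib_left intro!: sum.cong)
  qed simp
  also have "\<dots> = (\<Sum>x'\<in>UNIV. \<Sum>x\<in>UNIV. if x' \<in> piX p x then PX p x / Pc p x * F x' else 0)"
    by (rule sum.swap)
  also have "\<dots> = (\<Sum>x'\<in>UNIV. F x' * ((\<Sum>x\<in>piX p x'. PX p x) / Pc p x'))"
  proof (rule sum.cong)
    fix x' :: 'x
    have "(\<Sum>x\<in>UNIV. if x' \<in> piX p x then PX p x / Pc p x * F x' else 0)
        = (\<Sum>x\<in>UNIV. if x \<in> piX p x' then F x' * (PX p x / Pc p x') else 0)"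
    proof (intro sum.cong refl)
      fix x assume "x \<in> (UNIV :: 'x set)"
      show "(if x' \<in> piX p x then PX p x / Pc p x * F x' else 0) = (if x \<in> piX p x' then F x' * (PX p x / Pc p x') else 0)"
      proof (cases "x \<in> piX p x'")
        case True
        hence "x' \<in> piX p x" by (simp add: piX_sym)
        moreover have "Pc p x = Pc p x'" using Pc_cong[OF True] .
        ultimately show ?thesis using True by simp
      next
        case False
        hence "x' \<notin> piX p x" by (simp add: piX_sym)
        thus ?thesis using False by simp
      qed
    qed
    also have "\<dots> = (\<Sum>x\<in>piX p x'. F x' * (PX p x / Pc p x'))"
      using sum.inter_restrict[of UNIV "\<lambda>x. F x' * (PX p x / Pc p x')" "piX p x'"] by simp
    finally show "(\<Sum>x\<in>UNIV. if x' \<in> piX p x then PX p x / Pc p x * F x' else 0) = F x' * ((\<Sum>x\<in>piX p x'. PX p x) / Pc p x')"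
      by (simp add: sum_distrib_left sum_divide_distrib)
  qed simp
  also have "\<dots> = (\<Sum>x'\<in>UNIV. F x')"
    using Pc_pos[OF full] by (simp add: Pc_def[symmetric] less_imp_neq[symmetric])
  finally show ?thesis by simp
qed



definition XTs :: "('x::finite \<times> 'y) pmf \<Rightarrow> ('x \<Rightarrow> nat pmf) \<Rightarrow> 'x \<Rightarrow> nat \<Rightarrow> real" where
  "XTs p \<kappa> x t = PX p x * pmf (\<kappa> x) t * ln (PX p x * pmf (\<kappa> x) t / (PX p x * QT p \<kappa> t))"

lemma IXT_expr': "I_XT p \<kappa> = (\<Sum>x\<in>UNIV. infsum (XTs p \<kappa> x) UNIV)"
  for p :: "('x::finite \<times> 'y::finite) pmf"
  unfolding IXT_expr XTs_def ..

lemma XTs_summable: "XTs p \<kappa> x summable_on A"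
  unfolding XTs_def[abs_def] by (rule XT_summable)

lemma QT_kbar:
  fixes p :: "('x::finite \<times> 'y) pmf"
  assumes full: "set_pmf (map_pmf fst p) = UNIV"
  shows "QT p (kbar p \<kappa>) = QT p \<kappa>"
proof
  fix t
  have "QT p (kbar p \<kappa>) t = (\<Sum>x\<in>UNIV. PX p x / Pc p x * (\<Sum>x'\<in>piX p x. PX p x' * pmf (\<kappa> x') t))"
    unfolding QT_def kbar_pmf[OF full] by simp
  also have "\<dots> = QT p \<kappa> t"
    unfolding QT_def by (rule class_reweight[OF full, symmetric])
  finally show "QT p (kbar p \<kappa>) t = QT p \<kappa> t" .
qed

lemma condY_cong_w:
  fixes p :: "('x::finite \<times> 'y::finite) pmf"
  assumes full: "set_pmf (map_pmf fst p) = UNIV" and "x' \<in> piX p x"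
  shows "PX p x' * (pmf p (x,y) / PX p x) = pmf p (x',y)"
proof -
  have "condY p x' = condY p x" using assms(2) unfolding piX_def by simp
  thus ?thesis using condY_pmf[OF full, of x y] condY_pmf[OF full, of x' y] PX_pos[OF full, of x] by simp
qed

lemma RTY_kbar:
  fixes p :: "('x::finite \<times> 'y::finite) pmf"
  assumes full: "set_pmf (map_pmf fst p) = UNIV"
  shows "RTY p (kbar p \<kappa>) t y = RTY p \<kappa> t y"
proof -
  have "RTY p (kbar p \<kappa>) t y = (\<Sum>x\<in>UNIV. pmf p (x,y) * ((\<Sum>x'\<in>piX p x. PX p x' * pmf (\<kappa> x') t) / Pc p x))"
    unfolding RTY_def kbar_pmf[OF full] ..
  also have "\<dots> = (\<Sum>x\<in>UNIV. PX p x / Pc p x * (\<Sum>x'\<in>piX p x. pmf p (x',y) * pmf (\<kappa> x') t))"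
  proof (rule sum.cong)
    fix x :: 'x
    have "pmf p (x,y) * (\<Sum>x'\<in>piX p x. PX p x' * pmf (\<kappa> x') t)
        = PX p x * (\<Sum>x'\<in>piX p x. PX p x' * (pmf p (x,y) / PX p x) * pmf (\<kappa> x') t)"
      using PX_pos[OF full, of x] by (simp add: sum_distrib_left field_simps)
    also have "\<dots> = PX p x * (\<Sum>x'\<in>piX p x. pmf p (x',y) * pmf (\<kappa> x') t)"
      using condY_cong_w[OF full] by (intro arg_cong[where f="\<lambda>z. PX p x * z"] sum.cong) auto
    finally show "pmf p (x,y) * ((\<Sum>x'\<in>piX p x. PX p x' * pmf (\<kappa> x') t) / Pc p x) =
       PX p x / Pc p x * (\<Sum>x'\<in>piX p x. pmf p (x',y) * pmf (\<kappa> x') t)" by simp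
  qed simp
  also have "\<dots> = RTY p \<kappa> t y"
    unfolding RTY_def by (rule class_reweight[OF full, symmetric])
  finally show ?thesis .
qed

lemma ITY_kbar:
  fixes p :: "('x::finite \<times> 'y::finite) pmf"
  assumes full: "set_pmf (map_pmf fst p) = UNIV"
  shows "I_TY p (kbar p \<kappa>) = I_TY p \<kappa>"
  unfolding ITY_expr RTY_kbar[OF full] QT_kbar[OF full] ..



lemma infsum_diff_r:
  fixes f g :: "'a \<Rightarrow> real"
  assumes "f summable_on A" "g summable_on A"
  shows "infsum (\<lambda>x. f x - g x) A = infsum f A - infsum g A"
    and "(\<lambda>x. f x - g x) summable_on A"
proof -
  have s: "(\<lambda>x. - g x) summable_on A" using summable_on_uminus assms(2) by blast
  show "(\<lambda>x. f x - g x) summable_on A" using summable_on_add[OF assms(1) s] by simp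
  show "infsum (\<lambda>x. f x - g x) A = infsum f A - infsum g A"
    using infsum_add[OF assms(1) s] infsum_uminus[of g A] by simp
qed

lemma PXk_le_QT: "PX p x * pmf (\<kappa> x) t \<le> QT p \<kappa> t"
  for p :: "('x::finite \<times> 'y) pmf"
  unfolding QT_def by (rule member_le_sum) (auto simp: PX_nonneg)

lemma XTs_sum_fin:
  assumes "finite S"
  shows "infsum (\<lambda>t. \<Sum>x'\<in>S. XTs p \<kappa> x' t) UNIV = (\<Sum>x'\<in>S. infsum (XTs p \<kappa> x') UNIV)"
    and "(\<lambda>t. \<Sum>x'\<in>S. XTs p \<kappa> x' t) summable_on UNIV"
proof -
  have "\<And>i. i \<in> S \<Longrightarrow> XTs p \<kappa> i summable_on UNIV" by (rule XTs_summable)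
  from infsum_sum_fin[OF assms this] show "infsum (\<lambda>t. \<Sum>x'\<in>S. XTs p \<kappa> x' t) UNIV = (\<Sum>x'\<in>S. infsum (XTs p \<kappa> x') UNIV)"
    and "(\<lambda>t. \<Sum>x'\<in>S. XTs p \<kappa> x' t) summable_on UNIV" by auto
qed

definition Aa :: "('x::finite \<times> 'y) pmf \<Rightarrow> ('x \<Rightarrow> nat pmf) \<Rightarrow> 'x \<Rightarrow> nat \<Rightarrow> real" where
  "Aa p \<kappa> x t = (\<Sum>x'\<in>piX p x. PX p x' * pmf (\<kappa> x') t)"
definition Bb :: "('x::finite \<times> 'y) pmf \<Rightarrow> ('x \<Rightarrow> nat pmf) \<Rightarrow> 'x \<Rightarrow> nat \<Rightarrow> real" where
  "Bb p \<kappa> x t = (\<Sum>x'\<in>piX p x. PX p x' * QT p \<kappa> t)"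
definition Dd :: "('x::finite \<times> 'y) pmf \<Rightarrow> ('x \<Rightarrow> nat pmf) \<Rightarrow> 'x \<Rightarrow> nat \<Rightarrow> real" where
  "Dd p \<kappa> x t = (\<Sum>x'\<in>piX p x. XTs p \<kappa> x' t) - Aa p \<kappa> x t * ln (Aa p \<kappa> x t / Bb p \<kappa> x t)"

lemma XTs_kbar:
  fixes p :: "('x::finite \<times> 'y) pmf"
  assumes full: "set_pmf (map_pmf fst p) = UNIV"
  shows "XTs p (kbar p \<kappa>) x t = PX p x / Pc p x * (Aa p \<kappa> x t * ln (Aa p \<kappa> x t / Bb p \<kappa> x t))"
proof -
  have px: "PX p x > 0" using PX_pos[OF full] .
  have pc: "Pc p x > 0" using Pc_pos[OF full] .
  have kb: "pmf (kbar p \<kappa> x) t = Aa p \<kappa> x t / Pc p x" unfolding kbar_pmf[OF full] Aa_def ..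
  have bb: "Bb p \<kappa> x t = Pc p x * QT p \<kappa> t" unfolding Bb_def Pc_def by (simp add: sum_distrib_right)
  have "(PX p x * (Aa p \<kappa> x t / Pc p x)) / (PX p x * QT p \<kappa> t) = Aa p \<kappa> x t / (Pc p x * QT p \<kappa> t)"
    using px pc by simp
  thus ?thesis unfolding XTs_def kb QT_kbar[OF full] bb using px pc by simp
qed

lemma Aa_summable: "(\<lambda>t. Aa p \<kappa> x t * ln (Aa p \<kappa> x t / Bb p \<kappa> x t)) summable_on A"
  if full: "set_pmf (map_pmf fst p) = UNIV" for p :: "('x::finite \<times> 'y) pmf"
proof -
  have px: "PX p x > 0" using PX_pos[OF full] .
  have pc: "Pc p x > 0" using Pc_pos[OF full] .
  have "(\<lambda>t. Pc p x / PX p x * XTs p (kbar p \<kappa>) x t) summable_on A"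
    by (intro summable_on_cmult_right XTs_summable)
  moreover have "Pc p x / PX p x * XTs p (kbar p \<kappa>) x t = Aa p \<kappa> x t * ln (Aa p \<kappa> x t / Bb p \<kappa> x t)" for t
    unfolding XTs_kbar[OF full] using px pc by simp
  ultimately show ?thesis by simp
qed

lemma Dd_summable: "Dd p \<kappa> x summable_on A"
  if full: "set_pmf (map_pmf fst p) = UNIV" for p :: "('x::finite \<times> 'y) pmf"
proof -
  have "(\<lambda>t. \<Sum>x'\<in>piX p x. XTs p \<kappa> x' t) summable_on A"
    using infsum_sum_fin[of "piX p x" "XTs p \<kappa>" A] XTs_summable[of p \<kappa> _ A] by auto
  thus ?thesis unfolding Dd_def[abs_def] using infsum_diff_r(2) Aa_summable[OF full] by blast
qed

lemma Dd_nonneg: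
  fixes p :: "('x::finite \<times> 'y) pmf"
  shows "Dd p \<kappa> x t \<ge> 0"
    and "Dd p \<kappa> x t \<le> 0 \<Longrightarrow> x' \<in> piX p x \<Longrightarrow>
         PX p x' * pmf (\<kappa> x') t * Bb p \<kappa> x t = PX p x' * QT p \<kappa> t * Aa p \<kappa> x t"
proof -
  let ?a = "\<lambda>x'. PX p x' * pmf (\<kappa> x') t"
  let ?b = "\<lambda>x'. PX p x' * QT p \<kappa> t"
  have nn: "\<And>i. 0 \<le> ?a i" "\<And>i. 0 \<le> ?b i" by (simp_all add: PX_nonneg QT_nonneg)
  have pos: "?b i > 0" if "?a i > 0" for i
  proof -
    have "?a i \<le> QT p \<kappa> t" by (rule PXk_le_QT)
    hence "QT p \<kappa> t > 0" using that by simp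
    moreover have "PX p i > 0" using that PX_nonneg[of p i] by (simp add: zero_less_mult_iff)
    ultimately show ?thesis by simp
  qed
  have e: "(\<Sum>x'\<in>piX p x. XTs p \<kappa> x' t) = (\<Sum>x'\<in>piX p x. ?a x' * ln (?a x' / ?b x'))"
    unfolding XTs_def by simp
  show "Dd p \<kappa> x t \<ge> 0"
    using logsum(1)[of "piX p x" ?a ?b] nn pos unfolding Dd_def e Aa_def Bb_def by simp
  assume "Dd p \<kappa> x t \<le> 0" "x' \<in> piX p x"
  thus "?a x' * Bb p \<kappa> x t = ?b x' * Aa p \<kappa> x t"
    using logsum(2)[of "piX p x" ?a ?b x'] nn pos unfolding Dd_def e Aa_def Bb_def by simp
qed

lemma IXT_diff:
  fixes p :: "('x::finite \<times> 'y::finite) pmf"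
  assumes full: "set_pmf (map_pmf fst p) = UNIV"
  shows "I_XT p \<kappa> - I_XT p (kbar p \<kappa>) = (\<Sum>x\<in>UNIV. PX p x / Pc p x * infsum (Dd p \<kappa> x) UNIV)"
proof -
  have "I_XT p \<kappa> = (\<Sum>x\<in>UNIV. PX p x / Pc p x * (\<Sum>x'\<in>piX p x. infsum (XTs p \<kappa> x') UNIV))"
    unfolding IXT_expr' by (rule class_reweight[OF full])
  also have "\<dots> = (\<Sum>x\<in>UNIV. PX p x / Pc p x * infsum (\<lambda>t. \<Sum>x'\<in>piX p x. XTs p \<kappa> x' t) UNIV)"
  proof -
    have h: "\<And>x. infsum (\<lambda>t. \<Sum>x'\<in>piX p x. XTs p \<kappa> x' t) UNIV = (\<Sum>x'\<in>piX p x. infsum (XTs p \<kappa> x') UNIV)"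
      by (rule XTs_sum_fin) simp
    show ?thesis by (simp only: h)
  qed
  finally have 1: "I_XT p \<kappa> = \<dots>" .
  have 2: "I_XT p (kbar p \<kappa>) = (\<Sum>x\<in>UNIV. PX p x / Pc p x * infsum (\<lambda>t. Aa p \<kappa> x t * ln (Aa p \<kappa> x t / Bb p \<kappa> x t)) UNIV)"
    unfolding IXT_expr' XTs_kbar[OF full] by (intro sum.cong refl infsum_cmult_right')
  have s1: "(\<lambda>t. \<Sum>x'\<in>piX p x. XTs p \<kappa> x' t) summable_on UNIV" for x
    by (rule XTs_sum_fin) simp
  have "I_XT p \<kappa> - I_XT p (kbar p \<kappa>) = (\<Sum>x\<in>UNIV. PX p x / Pc p x *
        (infsum (\<lambda>t. \<Sum>x'\<in>piX p x. XTs p \<kappa> x' t) UNIV - infsum (\<lambda>t. Aa p \<kappa> x t * ln (Aa p \<kappa> x t / Bb p \<kappa> x t)) UNIV))"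
    unfolding 1 2 by (simp add: sum_subtractf right_diff_distrib)
  also have "\<dots> = (\<Sum>x\<in>UNIV. PX p x / Pc p x * infsum (Dd p \<kappa> x) UNIV)"
    unfolding Dd_def using infsum_diff_r(1)[OF s1 Aa_summable[OF full]] by simp
  finally show ?thesis .
qed

lemma IXT_kbar_le:
  fixes p :: "('x::finite \<times> 'y::finite) pmf"
  assumes full: "set_pmf (map_pmf fst p) = UNIV"
  shows "I_XT p (kbar p \<kappa>) \<le> I_XT p \<kappa>"
proof -
  have "0 \<le> (\<Sum>x\<in>UNIV. PX p x / Pc p x * infsum (Dd p \<kappa> x) UNIV)"
    using PX_nonneg Pc_pos[OF full] Dd_nonneg(1)
    by (intro sum_nonneg mult_nonneg_nonneg infsum_nonneg) (auto simp: less_imp_le intro!: divide_nonneg_pos)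
  thus ?thesis using IXT_diff[OF full, of \<kappa>] by linarith
qed

lemma IXT_kbar_eq:
  fixes p :: "('x::finite \<times> 'y::finite) pmf"
  assumes full: "set_pmf (map_pmf fst p) = UNIV"
    and le: "I_XT p \<kappa> \<le> I_XT p (kbar p \<kappa>)"
    and x': "x' \<in> piX p x"
  shows "\<kappa> x' = kbar p \<kappa> x"
proof (rule pmf_eqI)
  fix t
  have nn: "\<And>x. 0 \<le> PX p x / Pc p x * infsum (Dd p \<kappa> x) UNIV"
    using PX_nonneg Pc_pos[OF full] Dd_nonneg(1)
    by (intro mult_nonneg_nonneg infsum_nonneg) (auto simp: less_imp_le intro!: divide_nonneg_pos)
  have "(\<Sum>x\<in>UNIV. PX p x / Pc p x * infsum (Dd p \<kappa> x) UNIV) \<le> 0"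
    using IXT_diff[OF full, of \<kappa>] le by linarith
  hence "\<forall>x\<in>UNIV. PX p x / Pc p x * infsum (Dd p \<kappa> x) UNIV = 0"
    using nn by (intro sum_nonneg_eq_0_iff[THEN iffD1]) (auto intro: order_antisym sum_nonneg)
  hence "PX p x / Pc p x * infsum (Dd p \<kappa> x) UNIV = 0" by blast
  hence "infsum (Dd p \<kappa> x) UNIV = 0" using PX_pos[OF full, of x] Pc_pos[OF full, of x] by simp
  hence "Dd p \<kappa> x t = 0"
    using nonneg_infsum_le_0D[of "Dd p \<kappa> x" UNIV t] Dd_summable[OF full] Dd_nonneg(1)[of p \<kappa> x] by simp
  hence eq: "PX p x' * pmf (\<kappa> x') t * Bb p \<kappa> x t = PX p x' * QT p \<kappa> t * Aa p \<kappa> x t"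
    using Dd_nonneg(2)[OF _ x'] by simp
  have kb: "pmf (kbar p \<kappa> x) t = Aa p \<kappa> x t / Pc p x" unfolding kbar_pmf[OF full] Aa_def ..
  have bb: "Bb p \<kappa> x t = Pc p x * QT p \<kappa> t" unfolding Bb_def Pc_def by (simp add: sum_distrib_right)
  have px: "PX p x' > 0" and pc: "Pc p x > 0" using PX_pos[OF full] Pc_pos[OF full] by auto
  show "pmf (\<kappa> x') t = pmf (kbar p \<kappa> x) t"
  proof (cases "QT p \<kappa> t = 0")
    case False
    from eq have "pmf (\<kappa> x') t * (Pc p x * QT p \<kappa> t) = QT p \<kappa> t * Aa p \<kappa> x t"
      unfolding bb using px by (simp add: mult.assoc)
    thus ?thesis unfolding kb using False pc by (simp add: field_simps)
  next
    case True
    have a: "PX p x' * pmf (\<kappa> x') t \<le> QT p \<kappa> t" by (rule PXk_le_QT)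
    hence k0: "pmf (\<kappa> x') t = 0" using True px by (simp add: mult_le_0_iff)
    have "QT p (kbar p \<kappa>) t = 0" using True QT_kbar[OF full] by simp
    hence "PX p x * pmf (kbar p \<kappa> x) t \<le> 0" using PXk_le_QT[of p x "kbar p \<kappa>" t] by simp
    hence "pmf (kbar p \<kappa> x) t = 0" using PX_pos[OF full, of x] by (simp add: mult_le_0_iff)
    thus ?thesis using k0 by simp
  qed
qed



definition TYs :: "('x::finite \<times> 'y) pmf \<Rightarrow> ('x \<Rightarrow> nat pmf) \<Rightarrow> 'y \<Rightarrow> nat \<Rightarrow> real" where
  "TYs p \<kappa> y t = RTY p \<kappa> t y * ln (RTY p \<kappa> t y / (QT p \<kappa> t * PY p y))"

definition Ee :: "('x::finite \<times> 'y) pmf \<Rightarrow> ('x \<Rightarrow> nat pmf) \<Rightarrow> 'y \<Rightarrow> nat \<Rightarrow> real" where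
  "Ee p \<kappa> y t = (\<Sum>x\<in>UNIV. (pmf p (x,y) * pmf (\<kappa> x) t) * ln ((pmf p (x,y) * pmf (\<kappa> x) t) / (PX p x * pmf (\<kappa> x) t * PY p y)))"

definition mi :: "('x::finite \<times> 'y) pmf \<Rightarrow> 'x \<Rightarrow> 'y \<Rightarrow> real" where
  "mi p x y = pmf p (x,y) * ln (pmf p (x,y) / (PX p x * PY p y))"

lemma Ee_alt: "Ee p \<kappa> y t = (\<Sum>x\<in>UNIV. mi p x y * pmf (\<kappa> x) t)"
  unfolding Ee_def mi_def
proof (rule sum.cong)
  fix x
  show "pmf p (x, y) * pmf (\<kappa> x) t * ln (pmf p (x, y) * pmf (\<kappa> x) t / (PX p x * pmf (\<kappa> x) t * PY p y)) =
        pmf p (x, y) * ln (pmf p (x, y) / (PX p x * PY p y)) * pmf (\<kappa> x) t"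
  proof (cases "pmf (\<kappa> x) t = 0")
    case False
    hence "pmf p (x, y) * pmf (\<kappa> x) t / (PX p x * pmf (\<kappa> x) t * PY p y) = pmf p (x, y) / (PX p x * PY p y)"
      by simp
    thus ?thesis by simp
  qed simp
qed simp

lemma Ee_summable: "Ee p \<kappa> y summable_on A"
proof -
  have "(\<lambda>t. \<Sum>x\<in>UNIV. mi p x y * pmf (\<kappa> x) t) summable_on A"
    using infsum_sum_fin[of UNIV "\<lambda>x t. mi p x y * pmf (\<kappa> x) t" A]
    by (simp add: summable_on_cmult_right pmf_summable)
  thus ?thesis unfolding Ee_alt[abs_def] .
qed

lemma Ee_infsum: "infsum (Ee p \<kappa> y) UNIV = (\<Sum>x\<in>UNIV. mi p x y)"
proof -
  have "infsum (Ee p \<kappa> y) UNIV = infsum (\<lambda>t. \<Sum>x\<in>UNIV. mi p x y * pmf (\<kappa> x) t) UNIV"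
    unfolding Ee_alt ..
  also have "\<dots> = (\<Sum>x\<in>UNIV. infsum (\<lambda>t. mi p x y * pmf (\<kappa> x) t) UNIV)"
    using infsum_sum_fin[of UNIV "\<lambda>x t. mi p x y * pmf (\<kappa> x) t" UNIV]
    by (simp add: summable_on_cmult_right pmf_summable)
  also have "\<dots> = (\<Sum>x\<in>UNIV. mi p x y)"
    by (simp add: infsum_cmult_right' pmf_infsum_1)
  finally show ?thesis .
qed

lemma MI_mi: "mutual_info p = (\<Sum>y\<in>UNIV. \<Sum>x\<in>UNIV. mi p x y)"
  for p :: "('x::finite \<times> 'y::finite) pmf"
  unfolding MI_expr mi_def by (rule sum.swap)

lemma ITY_TYs: "I_TY p \<kappa> = (\<Sum>y\<in>UNIV. infsum (TYs p \<kappa> y) UNIV)"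
  for p :: "('x::finite \<times> 'y::finite) pmf"
  unfolding ITY_expr TYs_def ..

lemma TYs_summable: "TYs p \<kappa> y summable_on A"
  for p :: "('x::finite \<times> 'y::finite) pmf"
  unfolding TYs_def[abs_def] by (rule TY_summable)

lemma MI_minus_ITY:
  fixes p :: "('x::finite \<times> 'y::finite) pmf"
  shows "mutual_info p - I_TY p \<kappa> = (\<Sum>y\<in>UNIV. infsum (\<lambda>t. Ee p \<kappa> y t - TYs p \<kappa> y t) UNIV)"
proof -
  have "(\<Sum>y\<in>UNIV. infsum (\<lambda>t. Ee p \<kappa> y t - TYs p \<kappa> y t) UNIV)
      = (\<Sum>y\<in>UNIV. infsum (Ee p \<kappa> y) UNIV - infsum (TYs p \<kappa> y) UNIV)"
    by (intro sum.cong refl infsum_diff_r(1) Ee_summable TYs_summable)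
  also have "\<dots> = mutual_info p - I_TY p \<kappa>"
    unfolding MI_mi ITY_TYs Ee_infsum by (simp add: sum_subtractf)
  finally show ?thesis by simp
qed

lemma DPI_data:
  fixes p :: "('x::finite \<times> 'y::finite) pmf" and y :: 'y and \<kappa> :: "'x \<Rightarrow> nat pmf" and t :: nat
  defines "a \<equiv> \<lambda>x. pmf p (x,y) * pmf (\<kappa> x) t"
  defines "b \<equiv> \<lambda>x. PX p x * pmf (\<kappa> x) t * PY p y"
  shows "\<And>x. 0 \<le> a x" "\<And>x. 0 \<le> b x" "\<And>x. a x > 0 \<Longrightarrow> b x > 0"
    "(\<Sum>x\<in>UNIV. a x) = RTY p \<kappa> t y" "(\<Sum>x\<in>UNIV. b x) = QT p \<kappa> t * PY p y"
    "Ee p \<kappa> y t = (\<Sum>x\<in>UNIV. a x * ln (a x / b x))"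
    "TYs p \<kappa> y t = (\<Sum>x\<in>UNIV. a x) * ln ((\<Sum>x\<in>UNIV. a x) / (\<Sum>x\<in>UNIV. b x))"
proof -
  show "\<And>x. 0 \<le> a x" "\<And>x. 0 \<le> b x" unfolding a_def b_def by (simp_all add: PX_nonneg PY_nonneg)
  show "(\<Sum>x\<in>UNIV. a x) = RTY p \<kappa> t y" unfolding a_def RTY_def ..
  show bs: "(\<Sum>x\<in>UNIV. b x) = QT p \<kappa> t * PY p y" unfolding b_def QT_def by (simp add: sum_distrib_right)
  show "Ee p \<kappa> y t = (\<Sum>x\<in>UNIV. a x * ln (a x / b x))" unfolding Ee_def a_def b_def ..
  show "TYs p \<kappa> y t = (\<Sum>x\<in>UNIV. a x) * ln ((\<Sum>x\<in>UNIV. a x) / (\<Sum>x\<in>UNIV. b x))"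
    unfolding TYs_def bs by (simp add: a_def RTY_def)
  fix x assume "a x > 0"
  hence w: "pmf p (x,y) > 0" and k: "pmf (\<kappa> x) t > 0" unfolding a_def
    by (auto simp: zero_less_mult_iff less_le)
  have "PX p x > 0" using w PX_ge_w[of p x y] by simp
  moreover have "PY p y > 0" using w PY_ge_w[of p x y] by simp
  ultimately show "b x > 0" unfolding b_def using k by simp
qed

lemma DPI_nonneg:
  fixes p :: "('x::finite \<times> 'y::finite) pmf"
  shows "Ee p \<kappa> y t - TYs p \<kappa> y t \<ge> 0"
  using logsum(1)[of UNIV "\<lambda>x. pmf p (x,y) * pmf (\<kappa> x) t" "\<lambda>x. PX p x * pmf (\<kappa> x) t * PY p y"]
    DPI_data[where p=p and y=y and \<kappa>=\<kappa> and t=t] by simp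

lemma ITY_le_MI:
  fixes p :: "('x::finite \<times> 'y::finite) pmf"
  shows "I_TY p \<kappa> \<le> mutual_info p"
proof -
  have "0 \<le> (\<Sum>y\<in>UNIV. infsum (\<lambda>t. Ee p \<kappa> y t - TYs p \<kappa> y t) UNIV)"
    using DPI_nonneg by (intro sum_nonneg infsum_nonneg) auto
  thus ?thesis using MI_minus_ITY[of p \<kappa>] by linarith
qed

lemma ITY_ge_support:
  fixes p :: "('x::finite \<times> 'y::finite) pmf"
  assumes full: "set_pmf (map_pmf fst p) = UNIV"
    and ge: "mutual_info p \<le> I_TY p \<kappa>"
    and k1: "pmf (\<kappa> x) t > 0" and k2: "pmf (\<kappa> x') t > 0"
  shows "condY p x = condY p x'"
proof (rule pmf_eqI)
  fix y
  let ?D = "\<lambda>y t. Ee p \<kappa> y t - TYs p \<kappa> y t"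
  have nn: "\<And>y. 0 \<le> infsum (?D y) UNIV" using DPI_nonneg by (intro infsum_nonneg) auto
  have "(\<Sum>y\<in>UNIV. infsum (?D y) UNIV) \<le> 0" using MI_minus_ITY[of p \<kappa>] ge by linarith
  hence "\<forall>y\<in>UNIV. infsum (?D y) UNIV = 0"
    using nn by (intro sum_nonneg_eq_0_iff[THEN iffD1]) (auto intro: order_antisym sum_nonneg)
  hence "infsum (?D y) UNIV = 0" by blast
  hence D0: "?D y t = 0"
    using nonneg_infsum_le_0D[of "?D y" UNIV t] infsum_diff_r(2)[OF Ee_summable[of p \<kappa> y] TYs_summable[of p \<kappa> y]] DPI_nonneg[of p \<kappa> y]
    by simp
  have key: "pmf p (z,y) * QT p \<kappa> t = PX p z * RTY p \<kappa> t y" if kz: "pmf (\<kappa> z) t > 0" and py: "PY p y > 0" for z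
  proof -
    have "pmf p (z,y) * pmf (\<kappa> z) t * (QT p \<kappa> t * PY p y) = PX p z * pmf (\<kappa> z) t * PY p y * RTY p \<kappa> t y"
      using logsum(2)[of UNIV "\<lambda>x. pmf p (x,y) * pmf (\<kappa> x) t" "\<lambda>x. PX p x * pmf (\<kappa> x) t * PY p y" z]
        DPI_data[where p=p and y=y and \<kappa>=\<kappa> and t=t] D0 by simp
    hence "pmf (\<kappa> z) t * PY p y * (pmf p (z,y) * QT p \<kappa> t) = pmf (\<kappa> z) t * PY p y * (PX p z * RTY p \<kappa> t y)"
      by (simp add: algebra_simps)
    thus ?thesis using kz py by simp
  qed
  have mu: "pmf (condY p z) y = RTY p \<kappa> t y / QT p \<kappa> t" if kz: "pmf (\<kappa> z) t > 0" and py: "PY p y > 0" for z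
  proof -
    have pz: "PX p z > 0" using PX_pos[OF full] .
    have "QT p \<kappa> t > 0" using PXk_le_QT[of p z \<kappa> t] pz kz by (smt (verit) mult_pos_pos)
    thus ?thesis using key[OF kz py] condY_pmf[OF full, of z y] pz by (simp add: field_simps)
  qed
  show "pmf (condY p x) y = pmf (condY p x') y"
  proof (cases "PY p y > 0")
    case True thus ?thesis using mu[OF k1] mu[OF k2] by simp
  next
    case False
    hence "PY p y = 0" using PY_nonneg[of p y] by simp
    hence "\<And>z. pmf p (z,y) = 0" using PY_ge_w[of p _ y] by (simp add: order_antisym)
    thus ?thesis using condY_pmf[OF full, of x y] condY_pmf[OF full, of x' y] PX_pos[OF full, of x] PX_pos[OF full, of x'] by simp
  qed
qed



definition constc :: "('x \<times> 'y) pmf \<Rightarrow> ('x \<Rightarrow> nat pmf) \<Rightarrow> bool" where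
  "constc p \<kappa> \<longleftrightarrow> (\<forall>x x'. condY p x = condY p x' \<longrightarrow> \<kappa> x = \<kappa> x')"

definition suppc :: "('x \<times> 'y) pmf \<Rightarrow> ('x \<Rightarrow> nat pmf) \<Rightarrow> bool" where
  "suppc p \<kappa> \<longleftrightarrow> (\<forall>x x' t. pmf (\<kappa> x) t > 0 \<longrightarrow> pmf (\<kappa> x') t > 0 \<longrightarrow> condY p x = condY p x')"

lemma ITY_eq_support:
  fixes p :: "('x::finite \<times> 'y::finite) pmf"
  assumes full: "set_pmf (map_pmf fst p) = UNIV" and supp: "suppc p \<kappa>"
  shows "I_TY p \<kappa> = mutual_info p"
proof -
  have D0: "Ee p \<kappa> y t - TYs p \<kappa> y t = 0" for y t
  proof -
    let ?a = "\<lambda>x. pmf p (x,y) * pmf (\<kappa> x) t"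
    let ?b = "\<lambda>x. PX p x * pmf (\<kappa> x) t * PY p y"
    have "\<exists>c. \<forall>x\<in>UNIV. ?a x = c * ?b x"
    proof (cases "\<exists>x0. pmf (\<kappa> x0) t > 0")
      case True
      then obtain x0 where x0: "pmf (\<kappa> x0) t > 0" by blast
      show ?thesis
      proof (intro exI ballI)
        fix x :: 'x
        show "?a x = pmf (condY p x0) y / PY p y * ?b x"
        proof (cases "pmf (\<kappa> x) t > 0")
          case False
          hence "pmf (\<kappa> x) t = 0" using pmf_nonneg[of "\<kappa> x" t] by linarith
          thus ?thesis by simp
        next
          case True
          hence c: "condY p x = condY p x0" using supp x0 unfolding suppc_def by blast
          show ?thesis
          proof (cases "PY p y = 0")
            case True
            hence "pmf p (x,y) = 0" using PY_ge_w[of p x y] by (simp add: order_antisym)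
            thus ?thesis using True by simp
          next
            case False
            thus ?thesis using condY_pmf[OF full, of x y] c by simp
          qed
        qed
      qed
    next
      case False
      have "\<And>x. pmf (\<kappa> x) t = 0"
      proof -
        fix x
        have "\<not> pmf (\<kappa> x) t > 0" using False by blast
        thus "pmf (\<kappa> x) t = 0" using pmf_nonneg[of "\<kappa> x" t] by linarith
      qed
      thus ?thesis by simp
    qed
    then obtain c where "\<And>x. ?a x = c * ?b x" by blast
    hence "(\<Sum>x\<in>UNIV. ?a x * ln (?a x / ?b x)) = (\<Sum>x\<in>UNIV. ?a x) * ln ((\<Sum>x\<in>UNIV. ?a x) / (\<Sum>x\<in>UNIV. ?b x))"
      using DPI_data[where p=p and y=y and \<kappa>=\<kappa> and t=t] by (intro logsum_eq[where c=c]) auto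
    thus ?thesis using DPI_data[where p=p and y=y and \<kappa>=\<kappa> and t=t] by simp
  qed
  have "mutual_info p - I_TY p \<kappa> = 0" unfolding MI_minus_ITY D0 by simp
  thus ?thesis by simp
qed

lemma IXT_good:
  fixes p :: "('x::finite \<times> 'y::finite) pmf"
  assumes full: "set_pmf (map_pmf fst p) = UNIV" and supp: "suppc p \<kappa>" and cst: "constc p \<kappa>"
  shows "I_XT p \<kappa> = (\<Sum>x\<in>UNIV. - (PX p x * ln (Pc p x)))"
proof -
  have e: "XTs p \<kappa> x t = - (PX p x * ln (Pc p x)) * pmf (\<kappa> x) t" for x t
  proof (cases "pmf (\<kappa> x) t > 0")
    case False
    hence "pmf (\<kappa> x) t = 0" using pmf_nonneg[of "\<kappa> x" t] by linarith
    thus ?thesis unfolding XTs_def by simp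
  next
    case True
    have "QT p \<kappa> t = (\<Sum>x'\<in>UNIV. if x' \<in> piX p x then PX p x' * pmf (\<kappa> x) t else 0)"
      unfolding QT_def
    proof (rule sum.cong)
      fix x' :: 'x
      show "PX p x' * pmf (\<kappa> x') t = (if x' \<in> piX p x then PX p x' * pmf (\<kappa> x) t else 0)"
      proof (cases "x' \<in> piX p x")
        case True
        hence "condY p x' = condY p x" unfolding piX_def by simp
        hence "\<kappa> x' = \<kappa> x" using cst unfolding constc_def by blast
        thus ?thesis using True by simp
      next
        case False
        have "\<not> pmf (\<kappa> x') t > 0"
        proof
          assume "pmf (\<kappa> x') t > 0"
          hence "condY p x' = condY p x" using supp \<open>pmf (\<kappa> x) t > 0\<close> unfolding suppc_def by blast
          thus False using False unfolding piX_def by simp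
        qed
        hence "pmf (\<kappa> x') t = 0" using pmf_nonneg[of "\<kappa> x'" t] by linarith
        thus ?thesis using False by simp
      qed
    qed simp
    also have "\<dots> = (\<Sum>x'\<in>piX p x. PX p x' * pmf (\<kappa> x) t)"
      using sum.inter_restrict[of UNIV "\<lambda>x'. PX p x' * pmf (\<kappa> x) t" "piX p x"] by simp
    also have "\<dots> = Pc p x * pmf (\<kappa> x) t" unfolding Pc_def by (simp add: sum_distrib_right)
    finally have q: "QT p \<kappa> t = Pc p x * pmf (\<kappa> x) t" .
    have px: "PX p x > 0" and pc: "Pc p x > 0" using PX_pos[OF full] Pc_pos[OF full] by auto
    have "PX p x * pmf (\<kappa> x) t / (PX p x * QT p \<kappa> t) = inverse (Pc p x)"
      unfolding q using px pc True by (simp add: field_simps)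
    thus ?thesis unfolding XTs_def using pc by (simp add: ln_inverse)
  qed
  have i: "infsum (XTs p \<kappa> x) UNIV = - (PX p x * ln (Pc p x))" for x
  proof -
    have "infsum (XTs p \<kappa> x) UNIV = infsum (\<lambda>t. (- (PX p x * ln (Pc p x))) * pmf (\<kappa> x) t) UNIV"
      by (rule infsum_cong) (rule e)
    also have "\<dots> = (- (PX p x * ln (Pc p x))) * infsum (pmf (\<kappa> x)) UNIV"
      by (rule infsum_cmult_right')
    finally show ?thesis by (simp add: pmf_infsum_1)
  qed
  show ?thesis unfolding IXT_expr' i ..
qed

lemma IB_const:
  fixes p :: "('x::finite \<times> 'y::finite) pmf"
  assumes full: "set_pmf (map_pmf fst p) = UNIV" and k: "\<kappa> \<in> IB p lam"
  shows "constc p \<kappa>"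
proof -
  have "I_TY p (kbar p \<kappa>) \<ge> lam" using k ITY_kbar[OF full] unfolding IB_def by simp
  hence le: "I_XT p \<kappa> \<le> I_XT p (kbar p \<kappa>)" using k unfolding IB_def by blast
  show ?thesis unfolding constc_def
  proof (intro allI impI)
    fix x x' assume "condY p x = condY p x'"
    hence "x' \<in> piX p x" unfolding piX_def by simp
    have "\<kappa> x = kbar p \<kappa> x" using IXT_kbar_eq[OF full le piX_self] .
    moreover have "\<kappa> x' = kbar p \<kappa> x" using IXT_kbar_eq[OF full le \<open>x' \<in> piX p x\<close>] .
    ultimately show "\<kappa> x = \<kappa> x'" by simp
  qed
qed

lemma kbar_const: "constc p (kbar p \<kappa>)"
  unfolding constc_def
proof (intro allI impI)
  fix x x' assume "condY p x = condY p x'"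
  hence "x' \<in> piX p x" unfolding piX_def by simp
  from kbar_cong[OF this, of \<kappa>] show "kbar p \<kappa> x = kbar p \<kappa> x'" by simp
qed

lemma ITY_ge_suppc:
  fixes p :: "('x::finite \<times> 'y::finite) pmf"
  assumes full: "set_pmf (map_pmf fst p) = UNIV" and ge: "mutual_info p \<le> I_TY p \<kappa>"
  shows "suppc p \<kappa>"
  unfolding suppc_def using ITY_ge_support[OF full ge] by blast



lemma chan_comp_det_right: "chan_comp \<gamma> (det f) = (\<lambda>x. \<gamma> (f x))"
  unfolding chan_comp_def det_def by (simp add: bind_return_pmf)

lemma chan_comp_det_left: "chan_comp (det f) \<gamma> a = map_pmf f (\<gamma> a)"
  unfolding chan_comp_def det_def map_pmf_def by simp

lemma piX_eq_iff: "piX p x = piX p x' \<longleftrightarrow> condY p x = condY p x'"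
  unfolding piX_def by auto

lemma part_i_sub:
  fixes p :: "('x::finite \<times> 'y::finite) pmf"
  assumes full: "set_pmf (map_pmf fst p) = UNIV" and k: "\<kappa> \<in> IB p (mutual_info p)"
  shows "\<exists>\<gamma>::'x set \<Rightarrow> nat pmf. \<kappa> = chan_comp \<gamma> (det (piX p)) \<and> congruent_chan (Xbar p) \<gamma>"
proof -
  have cst: "constc p \<kappa>" by (rule IB_const[OF full k])
  have supp: "suppc p \<kappa>" using ITY_ge_suppc[OF full] k unfolding IB_def by blast
  define \<gamma> where "\<gamma> c = \<kappa> (SOME x. x \<in> c)" for c :: "'x set"
  have g: "\<gamma> (piX p x) = \<kappa> x" for x
  proof -
    have "(SOME x'. x' \<in> piX p x) \<in> piX p x" using piX_self by (rule someI)
    hence "condY p (SOME x'. x' \<in> piX p x) = condY p x" unfolding piX_def by simp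
    thus ?thesis unfolding \<gamma>_def using cst unfolding constc_def by blast
  qed
  have e: "\<kappa> = chan_comp \<gamma> (det (piX p))" unfolding chan_comp_det_right g ..
  define f where "f t = piX p (SOME x. pmf (\<kappa> x) t > 0)" for t
  have "congruent_chan (Xbar p) \<gamma>" unfolding congruent_chan_def
  proof (intro exI conjI allI ballI)
    show "f b \<in> Xbar p" for b unfolding f_def Xbar_def by simp
    fix a assume "a \<in> Xbar p"
    then obtain x0 where a: "a = piX p x0" unfolding Xbar_def by blast
    have "map_pmf f (\<gamma> a) = map_pmf (\<lambda>_. a) (\<gamma> a)"
    proof (rule map_pmf_cong[OF refl])
      fix t assume "t \<in> set_pmf (\<gamma> a)"
      hence t0: "pmf (\<kappa> x0) t > 0" unfolding a g by (simp add: pmf_positive)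
      hence "pmf (\<kappa> (SOME x. pmf (\<kappa> x) t > 0)) t > 0" by (rule someI)
      hence "condY p (SOME x. pmf (\<kappa> x) t > 0) = condY p x0" using supp t0 unfolding suppc_def by blast
      thus "f t = a" unfolding f_def a piX_eq_iff .
    qed
    thus "chan_comp (det f) \<gamma> a = det id a" unfolding chan_comp_det_left by (simp add: det_def)
  qed
  thus ?thesis using e by blast
qed

lemma part_i_sup:
  fixes p :: "('x::finite \<times> 'y::finite) pmf" and \<gamma> :: "'x set \<Rightarrow> nat pmf"
  assumes full: "set_pmf (map_pmf fst p) = UNIV" and cg: "congruent_chan (Xbar p) \<gamma>"
  shows "chan_comp \<gamma> (det (piX p)) \<in> IB p (mutual_info p)"
proof -
  define \<kappa> where "\<kappa> = chan_comp \<gamma> (det (piX p))"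
  have kx: "\<kappa> x = \<gamma> (piX p x)" for x unfolding \<kappa>_def chan_comp_det_right ..
  have cst: "constc p \<kappa>" unfolding constc_def kx using piX_eq_iff by metis
  obtain f where f: "\<And>b. f b \<in> Xbar p" "\<And>a. a \<in> Xbar p \<Longrightarrow> chan_comp (det f) \<gamma> a = det id a"
    using cg unfolding congruent_chan_def by blast
  have ft: "f t = piX p x" if "pmf (\<kappa> x) t > 0" for x t
  proof -
    have a: "piX p x \<in> Xbar p" unfolding Xbar_def by simp
    have "t \<in> set_pmf (\<gamma> (piX p x))" using that unfolding kx by (simp add: set_pmf_iff)
    hence "f t \<in> set_pmf (map_pmf f (\<gamma> (piX p x)))" by simp
    also have "map_pmf f (\<gamma> (piX p x)) = return_pmf (piX p x)"
      using f(2)[OF a] unfolding chan_comp_det_left by (simp add: det_def)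
    finally show ?thesis by simp
  qed
  have supp: "suppc p \<kappa>" unfolding suppc_def
  proof (intro allI impI)
    fix x x' t assume "pmf (\<kappa> x) t > 0" "pmf (\<kappa> x') t > 0"
    hence "piX p x = piX p x'" using ft by metis
    thus "condY p x = condY p x'" using piX_eq_iff by metis
  qed
  have ity: "I_TY p \<kappa> = mutual_info p" by (rule ITY_eq_support[OF full supp])
  have ixt: "I_XT p \<kappa> = (\<Sum>x\<in>UNIV. - (PX p x * ln (Pc p x)))" by (rule IXT_good[OF full supp cst])
  have "I_XT p \<kappa> \<le> I_XT p q'" if q': "mutual_info p \<le> I_TY p q'" for q'
  proof -
    have "mutual_info p \<le> I_TY p (kbar p q')" using q' ITY_kbar[OF full] by simp
    hence "suppc p (kbar p q')" by (rule ITY_ge_suppc[OF full])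
    hence "I_XT p (kbar p q') = (\<Sum>x\<in>UNIV. - (PX p x * ln (Pc p x)))"
      using IXT_good[OF full _ kbar_const] by blast
    thus ?thesis using ixt IXT_kbar_le[OF full, of q'] by simp
  qed
  thus ?thesis unfolding IB_def \<kappa>_def[symmetric] using ity by simp
qed

lemma Gci_iff: "\<sigma> \<in> Gci p \<longleftrightarrow> bij \<sigma> \<and> (\<forall>x. condY p (\<sigma> x) = condY p x)"
  unfolding Gci_def chan_comp_det_right by (auto simp: fun_eq_iff)

theorem theorem1:
  fixes p :: "('x::finite \<times> 'y::finite) pmf" and \<sigma> :: "'x \<Rightarrow> 'x"
  assumes full: "set_pmf (map_pmf fst p) = UNIV"
    and bij: "bij \<sigma>"
  shows
    "IB p (mutual_info p) =
       {chan_comp \<gamma> (det (piX p)) | \<gamma> :: 'x set \<Rightarrow> nat pmf. congruent_chan (Xbar p) \<gamma>}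
     \<and> (\<forall>\<kappa>\<in>IB p (mutual_info p). \<sigma> \<in> Gci p \<longleftrightarrow> chan_comp \<kappa> (det \<sigma>) = \<kappa>)
     \<and> (\<sigma> \<in> Gci p \<longrightarrow>
          (\<forall>lam. 0 \<le> lam \<and> lam \<le> mutual_info p \<longrightarrow>
             (\<forall>\<kappa>\<in>IB p lam. chan_comp \<kappa> (det \<sigma>) = \<kappa>)))
     \<and> piX p = pi_ci p"
proof (intro conjI)
  show "IB p (mutual_info p) =
       {chan_comp \<gamma> (det (piX p)) | \<gamma> :: 'x set \<Rightarrow> nat pmf. congruent_chan (Xbar p) \<gamma>}"
  proof
    show "IB p (mutual_info p) \<subseteq> {chan_comp \<gamma> (det (piX p)) | \<gamma> :: 'x set \<Rightarrow> nat pmf. congruent_chan (Xbar p) \<gamma>}"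
      using part_i_sub[OF full] by blast
    show "{chan_comp \<gamma> (det (piX p)) | \<gamma> :: 'x set \<Rightarrow> nat pmf. congruent_chan (Xbar p) \<gamma>} \<subseteq> IB p (mutual_info p)"
      using part_i_sup[OF full] by blast
  qed
  show "\<forall>\<kappa>\<in>IB p (mutual_info p). \<sigma> \<in> Gci p \<longleftrightarrow> chan_comp \<kappa> (det \<sigma>) = \<kappa>"
  proof
    fix \<kappa> assume k: "\<kappa> \<in> IB p (mutual_info p)"
    have cst: "constc p \<kappa>" by (rule IB_const[OF full k])
    have supp: "suppc p \<kappa>" using ITY_ge_suppc[OF full] k unfolding IB_def by blast
    show "\<sigma> \<in> Gci p \<longleftrightarrow> chan_comp \<kappa> (det \<sigma>) = \<kappa>"
    proof
      assume "\<sigma> \<in> Gci p"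
      hence "\<forall>x. condY p (\<sigma> x) = condY p x" using Gci_iff[of \<sigma> p] by simp
      note h = this
      show "chan_comp \<kappa> (det \<sigma>) = \<kappa>" unfolding chan_comp_det_right
      proof (rule ext)
        fix x
        from h have "condY p (\<sigma> x) = condY p x" by blast
        with cst show "\<kappa> (\<sigma> x) = \<kappa> x" unfolding constc_def by blast
      qed
    next
      assume "chan_comp \<kappa> (det \<sigma>) = \<kappa>"
      hence ks: "\<kappa> (\<sigma> x) = \<kappa> x" for x unfolding chan_comp_det_right using fun_cong by metis
      have "condY p (\<sigma> x) = condY p x" for x
      proof -
        obtain t where "t \<in> set_pmf (\<kappa> x)" using set_pmf_not_empty[of "\<kappa> x"] by blast
        hence "pmf (\<kappa> x) t > 0" by (simp add: pmf_positive)
        moreover hence "pmf (\<kappa> (\<sigma> x)) t > 0" using ks by simp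
        ultimately show ?thesis using supp unfolding suppc_def by blast
      qed
      thus "\<sigma> \<in> Gci p" using Gci_iff[of \<sigma> p] bij by simp
    qed
  qed
  show "\<sigma> \<in> Gci p \<longrightarrow> (\<forall>lam. 0 \<le> lam \<and> lam \<le> mutual_info p \<longrightarrow> (\<forall>\<kappa>\<in>IB p lam. chan_comp \<kappa> (det \<sigma>) = \<kappa>))"
  proof (intro impI allI ballI)
    fix lam \<kappa> assume "\<sigma> \<in> Gci p" and k: "\<kappa> \<in> IB p lam"
    hence "\<forall>x. condY p (\<sigma> x) = condY p x" using Gci_iff[of \<sigma> p] by simp
    moreover have "constc p \<kappa>" by (rule IB_const[OF full k])
    ultimately have h: "\<forall>x. condY p (\<sigma> x) = condY p x" and cst: "constc p \<kappa>" by blast+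
    show "chan_comp \<kappa> (det \<sigma>) = \<kappa>" unfolding chan_comp_det_right
    proof (rule ext)
      fix x
      from h have "condY p (\<sigma> x) = condY p x" by blast
      with cst show "\<kappa> (\<sigma> x) = \<kappa> x" unfolding constc_def by blast
    qed
  qed
  show "piX p = pi_ci p"
  proof (rule ext, rule set_eqI)
    fix x x'
    show "x' \<in> piX p x \<longleftrightarrow> x' \<in> pi_ci p x"
    proof
      assume x': "x' \<in> piX p x"
      hence c: "condY p x' = condY p x" unfolding piX_def by simp
      define \<tau> where "\<tau> z = (if z = x then x' else if z = x' then x else z)" for z
      have "\<tau> \<circ> \<tau> = id" unfolding \<tau>_def by (auto simp: fun_eq_iff)
      hence b: "bij \<tau>" using o_bij by blast
      have "condY p (\<tau> z) = condY p z" for z unfolding \<tau>_def using c by auto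
      hence "\<tau> \<in> Gci p" using Gci_iff[of \<tau> p] b by simp
      moreover have "\<tau> x = x'" unfolding \<tau>_def by simp
      ultimately show "x' \<in> pi_ci p x" unfolding pi_ci_def by blast
    next
      assume "x' \<in> pi_ci p x"
      then obtain \<tau> where "\<tau> \<in> Gci p" "x' = \<tau> x" unfolding pi_ci_def by blast
      thus "x' \<in> piX p x" unfolding piX_def using Gci_iff[of \<tau> p] by simp
    qed
  qed
qed

end
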